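(* Define $F:\mathbb{R}^2\to\mathbb{R}$ by $$F(x)=\begin{cases}\exp\!\left(\frac{1}{\|x\|_2^2-1}\right) & \|x\|_2<1\\ 0 & \|x\|_2=1\\ -\exp\!\left(\frac{-1}{\|x\|_2^2-1}\right)\left[\sin\!\left(\frac{1}{\|x\|_2-1}\right)\frac{x^{(1)}}{\|x\|_2}-\cos\!\left(\frac{1}{\|x\|_2-1}\right)\frac{x^{(2)}}{\|x\|_2}\right] & \|x\|_2>1,\end{cases}$$ where $x^{(1)},x^{(2)}$ are the components of $x$. Then $F$ is bounded from below, is differentiable at every point of $\mathbb{R}^2$, and its gradient is locally Lipschitz continuous on $\mathbb{R}^2$. *)

theory Defs
  imports "HOL-Analysis.Analysis"
begin

definition F61 :: "real^2 \<Rightarrow> real" where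
  "F61 x = (if norm x < 1 then exp (1 / ((norm x)\<^sup>2 - 1))
            else if norm x = 1 then 0
            else - exp (-1 / ((norm x)\<^sup>2 - 1)) *
                   (sin (1 / (norm x - 1)) * (x $ 1) / norm x
                    - cos (1 / (norm x - 1)) * (x $ 2) / norm x))"

definition locally_lipschitz_everywhere :: "('a::metric_space \<Rightarrow> 'b::metric_space) \<Rightarrow> bool" where
  "locally_lipschitz_everywhere G \<longleftrightarrow> (\<forall>x. \<exists>e>0. \<exists>L. L-lipschitz_on (ball x e) G)"

end

theory Submission
  imports Defs
begin

lemma hbound: "\<exists>K. \<forall>t>0. exp (-1/t) * (1 + 1/t) ^ M \<le> (K::real)"
proof (intro exI allI impI)
  fix t :: real assume t: "t > 0"
  define y where "y = 1/t"
  define m where "m = Suc M"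
  have y: "y > 0" using t by (simp add: y_def)
  have m1: "real m \<ge> 1" by (simp add: m_def)
  have "(1 + y) / m \<le> 1 + y / m" using m1 y by (simp add: field_simps)
  also have "\<dots> \<le> exp (y / m)" by simp
  finally have "((1 + y) / m) ^ m \<le> exp (y / m) ^ m"
    using y m1 by (intro power_mono) auto
  also have "\<dots> = exp y" using m1 by (simp add: exp_of_nat_mult[symmetric])
  finally have A: "(1 + y) ^ m \<le> real m ^ m * exp y"
    using m1 by (simp add: power_divide field_simps)
  have "(1 + y) ^ M \<le> (1 + y) ^ m" using y by (intro power_increasing) (auto simp: m_def)
  with A have "(1 + y) ^ M \<le> real m ^ m * exp y" by linarith
  then have "(1 + y) ^ M / exp y \<le> real m ^ m" by (simp add: field_simps)
  then show "exp (-1/t) * (1 + 1/t) ^ M \<le> real (Suc M) ^ Suc M"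
    by (simp add: y_def m_def exp_minus field_simps)
qed

lemma deriv0_of_sq_bound:
  fixes f :: "real \<Rightarrow> real"
  assumes "\<And>t. \<bar>f t\<bar> \<le> B * t^2"
  shows "(f has_real_derivative 0) (at 0)"
proof -
  have f0: "f 0 = 0" using assms[of 0] by simp
  have "((\<lambda>y. (f y - f 0) / (y - 0)) \<longlongrightarrow> 0) (at 0)"
  proof (rule Lim_null_comparison)
    show "\<forall>\<^sub>F x in at 0. norm ((f x - f 0) / (x - 0)) \<le> B * \<bar>x\<bar>"
    proof (intro always_eventually allI)
      fix x :: real
      show "norm ((f x - f 0) / (x - 0)) \<le> B * \<bar>x\<bar>"
      proof (cases "x = 0")
        case True then show ?thesis using assms[of 0] by simp
      next
        case False
        have "\<bar>f x\<bar> \<le> B * \<bar>x\<bar> * \<bar>x\<bar>" using assms[of x] by (simp add: power2_eq_square abs_mult[symmetric])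
        then show ?thesis using False by (simp add: f0 divide_le_eq abs_divide)
      qed
    qed
    show "((\<lambda>x. B * \<bar>x\<bar>) \<longlongrightarrow> 0) (at 0)"
      by (rule tendsto_eq_intros | simp)+
  qed
  then show ?thesis by (simp add: has_field_derivative_iff)
qed

lemma isCont0_of_lin_bound:
  fixes f :: "real \<Rightarrow> real"
  assumes "\<And>t. \<bar>f t\<bar> \<le> B * \<bar>t\<bar>"
  shows "isCont f 0"
proof -
  have f0: "f 0 = 0" using assms[of 0] by simp
  have "(f \<longlongrightarrow> 0) (at 0)"
  proof (rule Lim_null_comparison)
    show "\<forall>\<^sub>F x in at 0. norm (f x) \<le> B * \<bar>x\<bar>" using assms by simp
    show "((\<lambda>x. B * \<bar>x\<bar>) \<longlongrightarrow> 0) (at 0)"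
      by (rule tendsto_eq_intros | simp)+
  qed
  then show ?thesis by (simp add: isCont_def f0)
qed

lemma mvt_nz:
  fixes f D :: "real \<Rightarrow> real"
  assumes cont: "\<And>t. isCont f t"
    and der: "\<And>t. t \<noteq> 0 \<Longrightarrow> (f has_real_derivative D t) (at t)"
    and ab: "a < b" "\<not> (a < 0 \<and> 0 < b)"
  shows "\<exists>z. a < z \<and> z < b \<and> z \<noteq> 0 \<and> f b - f a = (b - a) * D z"
proof -
  have z: "\<And>z. a < z \<Longrightarrow> z < b \<Longrightarrow> z \<noteq> 0" using ab by linarith
  obtain l z where lz: "a < z" "z < b" "DERIV f z :> l" "f b - f a = (b - a) * l"
    using MVT[OF ab(1), of f] cont z der
    by (metis continuous_at_imp_continuous_on real_differentiable_def)
  have "l = D z" using DERIV_unique[OF lz(3) der[OF z[OF lz(1,2)]]] .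
  then show ?thesis using lz z by blast
qed

lemma LL1:
  fixes f D :: "real \<Rightarrow> real"
  assumes cont: "\<And>t. isCont f t"
    and der: "\<And>t. t \<noteq> 0 \<Longrightarrow> (f has_real_derivative D t) (at t)"
    and bnd: "\<And>R. \<exists>B. \<forall>t. t \<noteq> 0 \<longrightarrow> \<bar>t\<bar> \<le> R \<longrightarrow> \<bar>D t\<bar> \<le> B"
  shows "locally_lipschitz_everywhere f"
  unfolding locally_lipschitz_everywhere_def
proof
  fix x :: real
  obtain B where B: "\<And>t. t \<noteq> 0 \<Longrightarrow> \<bar>t\<bar> \<le> \<bar>x\<bar> + 1 \<Longrightarrow> \<bar>D t\<bar> \<le> B"
    using bnd[of "\<bar>x\<bar> + 1"] by blast
  define L where "L = max B 0"
  have key: "\<bar>f b - f a\<bar> \<le> L * (b - a)"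
    if hab: "a < b" "\<not> (a < 0 \<and> 0 < b)" "\<bar>a\<bar> \<le> \<bar>x\<bar> + 1" "\<bar>b\<bar> \<le> \<bar>x\<bar> + 1" for a b
  proof -
    obtain z where z: "a < z" "z < b" "z \<noteq> 0" "f b - f a = (b - a) * D z"
      using mvt_nz[OF cont der hab(1,2)] by blast
    have "\<bar>z\<bar> \<le> \<bar>x\<bar> + 1" using z hab by linarith
    then have "\<bar>D z\<bar> \<le> L" using B[OF z(3)] by (simp add: L_def)
    then show ?thesis using z(4) hab(1)
      by (simp add: abs_mult mult.commute mult_left_mono)
  qed
  have key2: "\<bar>f b - f a\<bar> \<le> L * (b - a)"
    if "a \<le> b" "\<bar>a\<bar> \<le> \<bar>x\<bar> + 1" "\<bar>b\<bar> \<le> \<bar>x\<bar> + 1" for a b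
  proof (cases "a < 0 \<and> 0 < b")
    case True
    have 1: "\<bar>f 0 - f a\<bar> \<le> L * (0 - a)" using key[of a 0] True that by auto
    have 2: "\<bar>f b - f 0\<bar> \<le> L * (b - 0)" using key[of 0 b] True that by auto
    show ?thesis using 1 2 by (simp add: algebra_simps)
  next
    case False
    show ?thesis
    proof (cases "a = b")
      case True then show ?thesis by simp
    next
      case False
      then show ?thesis using key[of a b] \<open>\<not> (a < 0 \<and> 0 < b)\<close> that by auto
    qed
  qed
  have "L-lipschitz_on (ball x 1) f"
  proof (rule lipschitz_on_leI)
    fix a b assume ab: "a \<in> ball x 1" "b \<in> ball x 1" "a \<le> b"
    then have "\<bar>a\<bar> \<le> \<bar>x\<bar> + 1" "\<bar>b\<bar> \<le> \<bar>x\<bar> + 1" by (auto simp: dist_real_def)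
    then show "dist (f a) (f b) \<le> L * dist a b"
      using key2[of a b] ab(3) by (simp add: dist_real_def abs_minus_commute)
  qed (simp add: L_def)
  then show "\<exists>e>0. \<exists>L. L-lipschitz_on (ball x e) f" by (intro exI[of _ 1]) auto
qed

definition flat :: "(real \<Rightarrow> real) \<Rightarrow> real \<Rightarrow> real" where
  "flat g t = (if t > 0 then exp (-1/t) * g t else 0)"
definition flat1 :: "(real \<Rightarrow> real) \<Rightarrow> (real \<Rightarrow> real) \<Rightarrow> real \<Rightarrow> real" where
  "flat1 g g1 t = (if t > 0 then exp (-1/t) * (g t / t^2 + g1 t) else 0)"
definition flat2 :: "(real \<Rightarrow> real) \<Rightarrow> (real \<Rightarrow> real) \<Rightarrow> (real \<Rightarrow> real) \<Rightarrow> real \<Rightarrow> real" where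
  "flat2 g g1 g2 t = (if t > 0 then exp (-1/t) * (g t / t^4 - 2 * g t / t^3 + 2 * g1 t / t^2 + g2 t) else 0)"

lemma pow_le_p: "t > 0 \<Longrightarrow> j \<le> k \<Longrightarrow> (1/t)^j \<le> (1 + 1/(t::real))^k"
proof -
  assume t: "t > 0" and jk: "j \<le> k"
  have "(1/t)^j \<le> (1 + 1/t)^j" using t by (intro power_mono) auto
  also have "\<dots> \<le> (1 + 1/t)^k" using t jk by (intro power_increasing) auto
  finally show ?thesis .
qed

lemma tp_ge1: "t > 0 \<Longrightarrow> 1 \<le> t * (1 + 1/(t::real))"
  by (simp add: field_simps)

lemma exp_shift: "t > 0 \<Longrightarrow> exp (-1/t) * (1 + 1/t)^N \<le> t^k * (exp (-1/t) * (1 + 1/(t::real))^(N+k))"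
proof -
  assume t: "t > 0"
  have "1 \<le> (t * (1 + 1/t))^k" using tp_ge1[OF t] by (simp add: one_le_power)
  then have "exp (-1/t) * (1 + 1/t)^N * 1 \<le> exp (-1/t) * (1 + 1/t)^N * (t * (1 + 1/t))^k"
    using t by (intro mult_left_mono) auto
  moreover have "(t * (1 + 1/t))^k = t^k * (1 + 1/t)^k" by (simp add: power_mult_distrib)
  ultimately show ?thesis by (simp add: power_add algebra_simps)
qed

lemma exp_inv_deriv: "t > 0 \<Longrightarrow> ((\<lambda>t. exp (-1/t)) has_real_derivative exp (-1/t) / t^2) (at (t::real))"
  by (rule derivative_eq_intros refl | simp)+ (simp add: power2_eq_square)

context
  fixes g g1 g2 :: "real \<Rightarrow> real" and C :: real and N :: nat
  assumes d1: "\<And>t. t > 0 \<Longrightarrow> (g has_real_derivative g1 t) (at t)"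
    and d2: "\<And>t. t > 0 \<Longrightarrow> (g1 has_real_derivative g2 t) (at t)"
    and bd: "\<And>t. t > 0 \<Longrightarrow> \<bar>g t\<bar> \<le> C * (1 + 1/t)^N \<and> \<bar>g1 t\<bar> \<le> C * (1 + 1/t)^N \<and> \<bar>g2 t\<bar> \<le> C * (1 + 1/t)^N"
begin

lemma C_nonneg: "C \<ge> 0"
proof -
  have "0 \<le> \<bar>g 1\<bar>" by simp
  also have "\<dots> \<le> C * 2^N" using bd[of 1] by simp
  finally have "0 \<le> C * 2^N" .
  moreover have "(0::real) < 2^N" by simp
  ultimately show ?thesis by (auto simp: zero_le_mult_iff)
qed

lemma flat_bound_sq: "\<exists>B. \<forall>t. \<bar>flat g t\<bar> \<le> B * t^2"
proof -
  obtain K :: real where K0: "\<forall>t>0. exp (-1/t) * (1 + 1/t)^(N+2) \<le> K" using hbound[of "N+2"] by blast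
  have K: "\<And>t. t > 0 \<Longrightarrow> exp (-1/t) * (1 + 1/t)^(N+2) \<le> K" using K0 by blast
  have "0 \<le> exp (-1/(1::real)) * (1 + 1/1)^(N+2)" by simp
  then have Kn: "K \<ge> 0" using K[of 1] by linarith
  have "\<bar>flat g t\<bar> \<le> (C * K) * t^2" for t
  proof (cases "t > 0")
    case True
    have "\<bar>flat g t\<bar> = exp (-1/t) * \<bar>g t\<bar>" using True by (simp add: flat_def abs_mult)
    also have "\<dots> \<le> exp (-1/t) * (C * (1 + 1/t)^N)" using bd[OF True] by (intro mult_left_mono) auto
    also have "\<dots> = C * (exp (-1/t) * (1 + 1/t)^N)" by simp
    also have "\<dots> \<le> C * (t^2 * (exp (-1/t) * (1 + 1/t)^(N+2)))"
      using exp_shift[OF True, of N 2] C_nonneg by (intro mult_left_mono) auto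
    also have "\<dots> \<le> C * (t^2 * K)" using K[OF True] C_nonneg True by (intro mult_left_mono) auto
    finally show ?thesis by (simp add: algebra_simps)
  next
    case False
    then show ?thesis using C_nonneg Kn by (simp add: flat_def)
  qed
  then show ?thesis by blast
qed

lemma flat_deriv: "(flat g has_real_derivative flat1 g g1 t) (at t)"
proof -
  consider "t > 0" | "t < 0" | "t = 0" by linarith
  then show ?thesis
  proof cases
    case 1
    have "((\<lambda>t. exp (-1/t) * g t) has_real_derivative
           exp (-1/t) / t^2 * g t + exp (-1/t) * g1 t) (at t)"
      using DERIV_mult'[OF exp_inv_deriv[OF 1] d1[OF 1]] by (simp add: algebra_simps)
    then have "((\<lambda>t. exp (-1/t) * g t) has_real_derivative flat1 g g1 t) (at t)"
      using 1 by (simp add: flat1_def algebra_simps)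
    then show ?thesis
      by (rule has_field_derivative_transform_within_open[where S = "{0<..}"]) (use 1 in \<open>auto simp: flat_def\<close>)
  next
    case 2
    have "((\<lambda>t. 0) has_real_derivative 0) (at t)" by simp
    then have "((\<lambda>t. 0) has_real_derivative flat1 g g1 t) (at t)" using 2 by (simp add: flat1_def)
    then show ?thesis
      by (rule has_field_derivative_transform_within_open[where S = "{..<0}"]) (use 2 in \<open>auto simp: flat_def\<close>)
  next
    case 3
    obtain B where "\<forall>t. \<bar>flat g t\<bar> \<le> B * t^2" using flat_bound_sq by blast
    then have "(flat g has_real_derivative 0) (at 0)" by (intro deriv0_of_sq_bound) auto
    then show ?thesis using 3 by (simp add: flat1_def)
  qed
qed

lemma flat1_deriv: "t \<noteq> 0 \<Longrightarrow> (flat1 g g1 has_real_derivative flat2 g g1 g2 t) (at t)"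
proof -
  assume "t \<noteq> 0"
  then consider "t > 0" | "t < 0" by linarith
  then show ?thesis
  proof cases
    case 1
    have q: "((\<lambda>t. t^2) has_real_derivative 2 * t) (at t)"
      by (rule derivative_eq_intros refl | simp)+
    have "((\<lambda>t. exp (-1/t) * (g t / t^2 + g1 t)) has_real_derivative
           exp (-1/t) / t^2 * (g t / t^2 + g1 t) + ((g1 t * t^2 - g t * (2 * t)) / (t^2 * t^2) + g2 t) * exp (-1/t)) (at t)"
      using DERIV_mult[OF exp_inv_deriv[OF 1] DERIV_add[OF DERIV_divide[OF d1[OF 1] q] d2[OF 1]]] 1 by simp
    then have "((\<lambda>t. exp (-1/t) * (g t / t^2 + g1 t)) has_real_derivative flat2 g g1 g2 t) (at t)"
    proof (rule DERIV_cong)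
      show "exp (-1/t) / t^2 * (g t / t^2 + g1 t) + ((g1 t * t^2 - g t * (2 * t)) / (t^2 * t^2) + g2 t) * exp (-1/t) = flat2 g g1 g2 t"
        using 1 by (simp add: flat2_def field_simps) algebra
    qed
    then show ?thesis
      by (rule has_field_derivative_transform_within_open[where S = "{0<..}"]) (use 1 in \<open>auto simp: flat1_def\<close>)
  next
    case 2
    have "((\<lambda>t. 0) has_real_derivative 0) (at t)" by simp
    then have "((\<lambda>t. 0) has_real_derivative flat2 g g1 g2 t) (at t)" using 2 by (simp add: flat2_def)
    then show ?thesis
      by (rule has_field_derivative_transform_within_open[where S = "{..<0}"]) (use 2 in \<open>auto simp: flat1_def\<close>)
  qed
qed

lemma gb: "t > 0 \<Longrightarrow> j \<le> k \<Longrightarrow> \<bar>g t\<bar> * (1/t)^j \<le> C * (1 + 1/t)^(N+k)"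
  and g1b: "t > 0 \<Longrightarrow> j \<le> k \<Longrightarrow> \<bar>g1 t\<bar> * (1/t)^j \<le> C * (1 + 1/t)^(N+k)"
  and g2b: "t > 0 \<Longrightarrow> j \<le> k \<Longrightarrow> \<bar>g2 t\<bar> * (1/t)^j \<le> C * (1 + 1/t)^(N+k)"
proof -
  assume t: "t > 0" and jk: "j \<le> k"
  have p: "(1/t)^j \<le> (1 + 1/t)^k" using pow_le_p[OF t jk] .
  have "\<And>a. \<bar>a\<bar> \<le> C * (1 + 1/t)^N \<Longrightarrow> \<bar>a\<bar> * (1/t)^j \<le> C * (1 + 1/t)^(N+k)"
  proof -
    fix a :: real assume a: "\<bar>a\<bar> \<le> C * (1 + 1/t)^N"
    have "\<bar>a\<bar> * (1/t)^j \<le> (C * (1 + 1/t)^N) * (1 + 1/t)^k"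
      using a p t by (intro mult_mono) auto
    then show "\<bar>a\<bar> * (1/t)^j \<le> C * (1 + 1/t)^(N+k)" by (simp add: power_add mult.assoc)
  qed
  then show "\<bar>g t\<bar> * (1/t)^j \<le> C * (1 + 1/t)^(N+k)"
    and "\<bar>g1 t\<bar> * (1/t)^j \<le> C * (1 + 1/t)^(N+k)"
    and "\<bar>g2 t\<bar> * (1/t)^j \<le> C * (1 + 1/t)^(N+k)" using bd[OF t] by auto
qed

lemma flat1_b: "t > 0 \<Longrightarrow> \<bar>flat1 g g1 t\<bar> \<le> 2 * C * (exp (-1/t) * (1 + 1/t)^(N+2))"
proof -
  assume t: "t > 0"
  have "\<bar>g t / t^2 + g1 t\<bar> \<le> \<bar>g t\<bar> * (1/t)^2 + \<bar>g1 t\<bar> * (1/t)^0"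
    using t by (simp add: abs_divide power_divide) (rule abs_triangle_ineq[THEN order_trans], simp add: abs_divide)
  also have "\<dots> \<le> C * (1 + 1/t)^(N+2) + C * (1 + 1/t)^(N+2)"
    by (intro add_mono gb g1b t) auto
  finally have "\<bar>g t / t^2 + g1 t\<bar> \<le> 2 * C * (1 + 1/t)^(N+2)" by simp
  then have "exp (-1/t) * \<bar>g t / t^2 + g1 t\<bar> \<le> exp (-1/t) * (2 * C * (1 + 1/t)^(N+2))"
    by (intro mult_left_mono) auto
  then show ?thesis using t by (simp add: flat1_def abs_mult mult_ac)
qed

lemma flat2_b: "t > 0 \<Longrightarrow> \<bar>flat2 g g1 g2 t\<bar> \<le> 6 * C * (exp (-1/t) * (1 + 1/t)^(N+4))"
proof -
  assume t: "t > 0"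
  have "\<bar>g t / t^4 - 2 * g t / t^3 + 2 * g1 t / t^2 + g2 t\<bar> \<le>
        \<bar>g t\<bar> * (1/t)^4 + 2 * (\<bar>g t\<bar> * (1/t)^3) + 2 * (\<bar>g1 t\<bar> * (1/t)^2) + \<bar>g2 t\<bar> * (1/t)^0"
  proof -
    have e1: "\<bar>g t / t^4\<bar> = \<bar>g t\<bar> * (1/t)^4" using t by (simp add: abs_divide power_divide)
    have e2: "\<bar>2 * g t / t^3\<bar> = 2 * (\<bar>g t\<bar> * (1/t)^3)" using t by (simp add: abs_divide power_divide abs_mult)
    have e3: "\<bar>2 * g1 t / t^2\<bar> = 2 * (\<bar>g1 t\<bar> * (1/t)^2)" using t by (simp add: abs_divide power_divide abs_mult)
    show ?thesis using e1 e2 e3 by (simp only: power_0 mult_1_right) linarith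
  qed
  also have "\<dots> \<le> C * (1 + 1/t)^(N+4) + 2 * (C * (1 + 1/t)^(N+4)) + 2 * (C * (1 + 1/t)^(N+4)) + C * (1 + 1/t)^(N+4)"
    by (intro add_mono mult_left_mono gb g1b g2b t) auto
  finally have "\<bar>g t / t^4 - 2 * g t / t^3 + 2 * g1 t / t^2 + g2 t\<bar> \<le> 6 * C * (1 + 1/t)^(N+4)" by simp
  then have "exp (-1/t) * \<bar>g t / t^4 - 2 * g t / t^3 + 2 * g1 t / t^2 + g2 t\<bar> \<le> exp (-1/t) * (6 * C * (1 + 1/t)^(N+4))"
    by (intro mult_left_mono) auto
  then show ?thesis using t by (simp add: flat2_def abs_mult mult_ac)
qed

lemma Kbound: "\<exists>K\<ge>0. \<forall>t>0. exp (-1/t) * (1 + 1/t)^M \<le> (K::real)"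
proof -
  obtain K :: real where K0: "\<forall>t>0. exp (-1/t) * (1 + 1/t)^M \<le> K" using hbound[of M] by blast
  have "0 \<le> exp (-1/(1::real)) * (1 + 1/1)^M" by simp
  then have Kn: "K \<ge> 0" using K0 by (metis zero_less_one order_trans)
  then show ?thesis using K0 by blast
qed

lemma flat_LL: "locally_lipschitz_everywhere (flat g)"
proof (rule LL1[where D = "flat1 g g1"])
  show "isCont (flat g) t" for t using flat_deriv DERIV_isCont by blast
  show "(flat g has_real_derivative flat1 g g1 t) (at t)" for t by (rule flat_deriv)
  obtain K :: real where K: "K \<ge> 0" "\<And>t. t > 0 \<Longrightarrow> exp (-1/t) * (1 + 1/t)^(N+2) \<le> K" using Kbound by blast
  have "\<bar>flat1 g g1 t\<bar> \<le> 2 * C * K" for t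
  proof (cases "t > 0")
    case True
    have "\<bar>flat1 g g1 t\<bar> \<le> 2 * C * (exp (-1/t) * (1 + 1/t)^(N+2))" by (rule flat1_b[OF True])
    also have "\<dots> \<le> 2 * C * K" using K(2)[OF True] C_nonneg by (intro mult_left_mono) auto
    finally show ?thesis .
  qed (use C_nonneg K in \<open>auto simp: flat1_def\<close>)
  then show "\<exists>B. \<forall>t. t \<noteq> 0 \<longrightarrow> \<bar>t\<bar> \<le> R \<longrightarrow> \<bar>flat1 g g1 t\<bar> \<le> B" for R by blast
qed

lemma flat1_LL: "locally_lipschitz_everywhere (flat1 g g1)"
proof (rule LL1[where D = "flat2 g g1 g2"])
  show "(flat1 g g1 has_real_derivative flat2 g g1 g2 t) (at t)" if "t \<noteq> 0" for t using flat1_deriv that .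
  obtain K :: real where K: "K \<ge> 0" "\<And>t. t > 0 \<Longrightarrow> exp (-1/t) * (1 + 1/t)^(N+2+1) \<le> K" using Kbound by blast
  have lin: "\<bar>flat1 g g1 t\<bar> \<le> (2 * C * K) * \<bar>t\<bar>" for t
  proof (cases "t > 0")
    case True
    have "\<bar>flat1 g g1 t\<bar> \<le> 2 * C * (exp (-1/t) * (1 + 1/t)^(N+2))" by (rule flat1_b[OF True])
    also have "\<dots> \<le> 2 * C * (t^1 * (exp (-1/t) * (1 + 1/t)^(N+2+1)))"
      using exp_shift[OF True, of "N+2" 1] C_nonneg by (intro mult_left_mono) auto
    also have "\<dots> \<le> 2 * C * (t * K)" using K(2)[OF True] C_nonneg True by (intro mult_left_mono) auto
    finally show ?thesis using True by (simp add: mult_ac)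
  next
    case False
    then have "flat1 g g1 t = 0" by (simp add: flat1_def)
    moreover have "0 \<le> (2 * C * K) * \<bar>t\<bar>" using C_nonneg K(1) by simp
    ultimately show ?thesis by simp
  qed
  show "isCont (flat1 g g1) t" for t
  proof (cases "t = 0")
    case True then show ?thesis using isCont0_of_lin_bound[OF lin] by simp
  next
    case False then show ?thesis using flat1_deriv DERIV_isCont by blast
  qed
  obtain K4 :: real where K4: "K4 \<ge> 0" "\<And>t. t > 0 \<Longrightarrow> exp (-1/t) * (1 + 1/t)^(N+4) \<le> K4" using Kbound by blast
  have "\<bar>flat2 g g1 g2 t\<bar> \<le> 6 * C * K4" for t
  proof (cases "t > 0")
    case True
    have "\<bar>flat2 g g1 g2 t\<bar> \<le> 6 * C * (exp (-1/t) * (1 + 1/t)^(N+4))" by (rule flat2_b[OF True])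
    also have "\<dots> \<le> 6 * C * K4" using K4(2)[OF True] C_nonneg by (intro mult_left_mono) auto
    finally show ?thesis .
  qed (use C_nonneg K4 in \<open>auto simp: flat2_def\<close>)
  then show "\<exists>B. \<forall>t. t \<noteq> 0 \<longrightarrow> \<bar>t\<bar> \<le> R \<longrightarrow> \<bar>flat2 g g1 g2 t\<bar> \<le> B" for R by blast
qed

end

definition Uq :: "real \<Rightarrow> real" where "Uq q = 1 / (q - 1)"
definition Uq1 :: "real \<Rightarrow> real" where "Uq1 q = - 1 / (2 * q * (q - 1)^2)"
definition Uq2 :: "real \<Rightarrow> real" where "Uq2 q = (3 * q - 1) / (4 * q^3 * (q - 1)^3)"
definition Wq :: "real \<Rightarrow> real" where "Wq q = 1 / q"
definition Wq1 :: "real \<Rightarrow> real" where "Wq1 q = - 1 / (2 * q^3)"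
definition Wq2 :: "real \<Rightarrow> real" where "Wq2 q = 3 / (4 * q^5)"

lemma chain_q:
  assumes t: "t > 0" and d: "(\<phi> has_real_derivative D) (at (sqrt (1 + t)))"
  shows "((\<lambda>t. \<phi> (sqrt (1 + t))) has_real_derivative D / (2 * sqrt (1 + t))) (at t)"
proof -
  have a: "((\<lambda>t. 1 + t) has_real_derivative 1) (at t)" by (rule derivative_eq_intros refl | simp)+
  have b: "(sqrt has_real_derivative inverse (sqrt (1 + t)) / 2) (at (1 + t))" using t by (intro DERIV_real_sqrt) simp
  have s: "((\<lambda>t. sqrt (1 + t)) has_real_derivative inverse (sqrt (1 + t)) / 2) (at t)"
    using DERIV_chain2[OF b a] by simp
  show ?thesis using DERIV_chain2[OF d s] by (simp add: field_simps)
qed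

lemma q_gt1: "t > 0 \<Longrightarrow> sqrt (1 + t) > 1" by simp

lemma dUq: "q > 1 \<Longrightarrow> (Uq has_real_derivative - 1 / (q - 1)^2) (at q)"
  unfolding Uq_def by (rule derivative_eq_intros refl | simp)+ (simp add: power2_eq_square)

lemma dUq1: "q > 1 \<Longrightarrow> (Uq1 has_real_derivative (3 * q - 1) / (2 * q^2 * (q - 1)^3)) (at q)"
  unfolding Uq1_def
  apply (rule derivative_eq_intros refl | simp)+
  apply (subgoal_tac "q - 1 \<noteq> 0")
  apply (simp add: field_simps)
  apply algebra
  apply simp
  done

lemma dWq: "q > 1 \<Longrightarrow> (Wq has_real_derivative - 1 / q^2) (at q)"
  unfolding Wq_def by (rule derivative_eq_intros refl | simp)+ (simp add: power2_eq_square)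

lemma dWq1: "q > 1 \<Longrightarrow> (Wq1 has_real_derivative 3 / (2 * q^4)) (at q)"
  unfolding Wq1_def
  apply (rule derivative_eq_intros refl | simp)+
  apply (simp add: field_simps power2_eq_square power3_eq_cube)
  apply algebra
  done

lemma dU_t: "t > 0 \<Longrightarrow> ((\<lambda>t. Uq (sqrt (1 + t))) has_real_derivative Uq1 (sqrt (1 + t))) (at t)"
proof -
  assume t: "t > 0"
  have q: "sqrt (1 + t) > 1" "sqrt (1 + t) - 1 \<noteq> 0" using t by auto
  have e: "\<And>r::real. r > 1 \<Longrightarrow> - 1 / (r - 1)^2 / (2 * r) = Uq1 r"
  proof -
    fix r :: real assume r: "r > 1"
    then have "r - 1 \<noteq> 0" "r \<noteq> 0" by auto
    then show "- 1 / (r - 1)^2 / (2 * r) = Uq1 r" unfolding Uq1_def by (simp add: field_simps) algebra?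
  qed
  show ?thesis using chain_q[OF t dUq[OF q(1)]] e[OF q(1)] by simp
qed

lemma dU1_t: "t > 0 \<Longrightarrow> ((\<lambda>t. Uq1 (sqrt (1 + t))) has_real_derivative Uq2 (sqrt (1 + t))) (at t)"
proof -
  assume t: "t > 0"
  have q: "sqrt (1 + t) > 1" "sqrt (1 + t) - 1 \<noteq> 0" using t by auto
  have e: "\<And>r::real. r > 1 \<Longrightarrow> (3 * r - 1) / (2 * r^2 * (r - 1)^3) / (2 * r) = Uq2 r"
  proof -
    fix r :: real assume r: "r > 1"
    then have "r - 1 \<noteq> 0" "r \<noteq> 0" by auto
    then show "(3 * r - 1) / (2 * r^2 * (r - 1)^3) / (2 * r) = Uq2 r" unfolding Uq2_def by (simp add: field_simps) algebra?
  qed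
  show ?thesis using chain_q[OF t dUq1[OF q(1)]] e[OF q(1)] by simp
qed

lemma dW_t: "t > 0 \<Longrightarrow> ((\<lambda>t. Wq (sqrt (1 + t))) has_real_derivative Wq1 (sqrt (1 + t))) (at t)"
proof -
  assume t: "t > 0"
  have q: "sqrt (1 + t) > 1" using t by auto
  have e: "\<And>r::real. r > 1 \<Longrightarrow> - 1 / r^2 / (2 * r) = Wq1 r"
  proof -
    fix r :: real assume r: "r > 1"
    then have "r - 1 \<noteq> 0" "r \<noteq> 0" by auto
    then show "- 1 / r^2 / (2 * r) = Wq1 r" unfolding Wq1_def by (simp add: field_simps) algebra?
  qed
  show ?thesis using chain_q[OF t dWq[OF q(1)]] e[OF q(1)] by simp
qed

lemma dW1_t: "t > 0 \<Longrightarrow> ((\<lambda>t. Wq1 (sqrt (1 + t))) has_real_derivative Wq2 (sqrt (1 + t))) (at t)"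
proof -
  assume t: "t > 0"
  have q: "sqrt (1 + t) > 1" using t by auto
  have e: "\<And>r::real. r > 1 \<Longrightarrow> 3 / (2 * r^4) / (2 * r) = Wq2 r"
  proof -
    fix r :: real assume r: "r > 1"
    then have "r - 1 \<noteq> 0" "r \<noteq> 0" by auto
    then show "3 / (2 * r^4) / (2 * r) = Wq2 r" unfolding Wq2_def by (simp add: field_simps) algebra?
  qed
  show ?thesis using chain_q[OF t dWq1[OF q(1)]] e[OF q(1)] by simp
qed

definition gs :: "real \<Rightarrow> real \<Rightarrow> real" where
  "gs c t = sin (Uq (sqrt (1 + t)) + c) * Wq (sqrt (1 + t))"
definition gs1 :: "real \<Rightarrow> real \<Rightarrow> real" where
  "gs1 c t = cos (Uq (sqrt (1 + t)) + c) * Uq1 (sqrt (1 + t)) * Wq (sqrt (1 + t))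
     + sin (Uq (sqrt (1 + t)) + c) * Wq1 (sqrt (1 + t))"
definition gs2 :: "real \<Rightarrow> real \<Rightarrow> real" where
  "gs2 c t = - sin (Uq (sqrt (1 + t)) + c) * (Uq1 (sqrt (1 + t)))^2 * Wq (sqrt (1 + t))
     + cos (Uq (sqrt (1 + t)) + c) * (Uq2 (sqrt (1 + t)) * Wq (sqrt (1 + t)) + Uq1 (sqrt (1 + t)) * Wq1 (sqrt (1 + t)))
     + cos (Uq (sqrt (1 + t)) + c) * Uq1 (sqrt (1 + t)) * Wq1 (sqrt (1 + t))
     + sin (Uq (sqrt (1 + t)) + c) * Wq2 (sqrt (1 + t))"

lemma dgs: "t > 0 \<Longrightarrow> (gs c has_real_derivative gs1 c t) (at t)"
  unfolding gs_def[abs_def] gs1_def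
  apply (rule derivative_eq_intros dU_t dW_t refl | assumption)+
  apply (simp add: algebra_simps)
  done

lemma dgs1: "t > 0 \<Longrightarrow> (gs1 c has_real_derivative gs2 c t) (at t)"
  unfolding gs1_def[abs_def] gs2_def
  apply (rule derivative_eq_intros dU_t dW_t dU1_t dW1_t refl | assumption)+
  apply (simp add: algebra_simps power2_eq_square)
  done

lemma v_bound:
  assumes t: "t > 0"
  shows "1 / (sqrt (1 + t) - 1) \<le> 2 * (1 + 1/t)"
proof -
  define q where "q = sqrt (1 + t)"
  have q1: "q > 1" using t by (simp add: q_def)
  have q2: "q^2 = 1 + t" using t by (simp add: q_def)
  have "q \<le> q^2" using q1 by (simp add: power2_eq_square)
  then have qle: "q \<le> 1 + t" using q2 by simp
  have "(q - 1) * (q + 1) = t" using q2 by (simp add: algebra_simps power2_eq_square)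
  then have "1 / (q - 1) = (q + 1) / t" using q1 t by (simp add: field_simps)
  also have "\<dots> \<le> (2 + t) / t" using qle t by (intro divide_right_mono) auto
  also have "\<dots> \<le> 2 * (1 + 1/t)" using t by (simp add: field_simps)
  finally show ?thesis by (simp add: q_def)
qed

lemma basic_bounds:
  assumes t: "t > 0"
  defines "q \<equiv> sqrt (1 + t)" and "p \<equiv> 1 + 1/t"
  shows "\<bar>Uq1 q\<bar> \<le> 4 * p^2" "\<bar>Uq2 q\<bar> \<le> 8 * p^3" "\<bar>Wq q\<bar> \<le> 1" "\<bar>Wq1 q\<bar> \<le> 1" "\<bar>Wq2 q\<bar> \<le> 1"
    "p \<ge> 1"
proof -
  have q1: "q > 1" using t by (simp add: q_def)
  define v where "v = 1 / (q - 1)"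
  have v0: "v > 0" using q1 by (simp add: v_def)
  have vb: "v \<le> 2 * p" using v_bound[OF t] by (simp add: v_def q_def p_def)
  show p1: "p \<ge> 1" using t by (simp add: p_def)
  have e1: "Uq1 q = - (v^2 / (2 * q))" unfolding Uq1_def v_def using q1 by (simp add: power_divide)
  have "\<bar>Uq1 q\<bar> = v^2 / (2 * q)" unfolding e1 using q1 by simp
  also have "\<dots> \<le> v^2" using q1 v0 by (simp add: divide_le_eq)
  also have "\<dots> \<le> (2 * p)^2" using vb v0 by (intro power_mono) auto
  finally show "\<bar>Uq1 q\<bar> \<le> 4 * p^2" by (simp add: power_mult_distrib)
  have e2: "Uq2 q = (3 * q - 1) / (4 * q^3) * v^3" unfolding Uq2_def v_def using q1 by (simp add: power_divide)
  have "\<bar>Uq2 q\<bar> = (3 * q - 1) / (4 * q^3) * v^3" unfolding e2 using q1 v0 by simp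
  also have "\<dots> \<le> 1 * v^3"
  proof (rule mult_right_mono)
    have "1 \<le> q * q" using mult_mono[of 1 q 1 q] q1 by simp
    then have "q * 1 \<le> q * (q * q)" using q1 by (intro mult_left_mono) auto
    then have "q \<le> q^3" by (simp add: power3_eq_cube)
    then show "(3 * q - 1) / (4 * q^3) \<le> 1" using q1 by (simp add: divide_le_eq)
  qed (use v0 in simp)
  also have "\<dots> \<le> (2 * p)^3" using vb v0 by (simp only: mult_1_left, intro power_mono) auto
  finally show "\<bar>Uq2 q\<bar> \<le> 8 * p^3" by (simp add: power_mult_distrib)
  show "\<bar>Wq q\<bar> \<le> 1" using q1 by (simp add: Wq_def)
  have "1 \<le> q^3" using q1 by simp
  then have "1 \<le> 2 * q^3" by linarith
  then show "\<bar>Wq1 q\<bar> \<le> 1" using q1 by (simp add: Wq1_def abs_divide divide_le_eq)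
  have "1 \<le> q^5" using q1 by simp
  then have "3 \<le> 4 * q^5" by linarith
  then show "\<bar>Wq2 q\<bar> \<le> 1" using q1 by (simp add: Wq2_def abs_divide divide_le_eq)
qed


lemma ab3: "\<bar>x::real\<bar> \<le> 1 \<Longrightarrow> \<bar>a\<bar> \<le> A \<Longrightarrow> \<bar>b\<bar> \<le> B \<Longrightarrow> \<bar>x * a * b\<bar> \<le> A * B"
proof -
  assume h: "\<bar>x\<bar> \<le> 1" "\<bar>a\<bar> \<le> A" "\<bar>b\<bar> \<le> B"
  have "\<bar>x * a * b\<bar> = \<bar>x\<bar> * (\<bar>a\<bar> * \<bar>b\<bar>)" by (simp add: abs_mult)
  also have "\<dots> \<le> 1 * (A * B)"
    using h by (intro mult_mono) (auto intro: order_trans[OF abs_ge_zero])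
  finally show ?thesis by simp
qed

lemma ab2: "\<bar>x::real\<bar> \<le> 1 \<Longrightarrow> \<bar>a\<bar> \<le> A \<Longrightarrow> \<bar>x * a\<bar> \<le> A"
proof -
  assume h: "\<bar>x\<bar> \<le> 1" "\<bar>a\<bar> \<le> A"
  have "\<bar>x * a\<bar> = \<bar>x\<bar> * \<bar>a\<bar>" by (simp add: abs_mult)
  also have "\<dots> \<le> 1 * A" using h by (intro mult_mono) (auto intro: order_trans[OF abs_ge_zero])
  finally show ?thesis by simp
qed

lemma ab2': "\<bar>a\<bar> \<le> A \<Longrightarrow> \<bar>x::real\<bar> \<le> 1 \<Longrightarrow> \<bar>a * x\<bar> \<le> A"
  by (metis ab2 mult.commute)

lemma gs_bounds:
  assumes t: "t > 0"
  shows "\<bar>gs c t\<bar> \<le> 33 * (1 + 1/t)^4 \<and> \<bar>gs1 c t\<bar> \<le> 33 * (1 + 1/t)^4 \<and> \<bar>gs2 c t\<bar> \<le> 33 * (1 + 1/t)^4"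
proof -
  define q where "q = sqrt (1 + t)"
  define p where "p = 1 + 1/t"
  note bb = basic_bounds[OF t, folded q_def p_def]
  have p2: "p^2 \<le> p^4" "p^3 \<le> p^4" "1 \<le> p^4" using bb(6) by (auto intro: power_increasing one_le_power)
  have s1: "\<bar>sin (Uq q + c)\<bar> \<le> 1" "\<bar>cos (Uq q + c)\<bar> \<le> 1" by auto
  have "\<bar>gs c t\<bar> \<le> 1" unfolding gs_def q_def[symmetric] by (rule ab2[OF s1(1) bb(3)])
  moreover
  have "\<bar>gs1 c t\<bar> \<le> 4 * p^2 * 1 + 1" unfolding gs1_def q_def[symmetric]
    by (rule order_trans[OF abs_triangle_ineq add_mono[OF ab3[OF s1(2) bb(1) bb(3)] ab2[OF s1(1) bb(4)]]])
  moreover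
  have "\<bar>Uq1 q\<bar>^2 \<le> (4 * p^2)^2" using bb(1) by (intro power_mono) auto
  then have "\<bar>(Uq1 q)^2\<bar> \<le> 4 * p^2 * (4 * p^2)" by (simp add: power_abs power2_eq_square[of "4 * p^2"])
  then have "\<bar>- sin (Uq q + c) * (Uq1 q)^2 * Wq q\<bar> \<le> 4 * p^2 * (4 * p^2) * 1"
    using ab3[OF s1(1) _ bb(3)] by simp
  moreover have "\<bar>Uq2 q * Wq q + Uq1 q * Wq1 q\<bar> \<le> 8 * p^3 * 1 + 4 * p^2 * 1"
    using order_trans[OF abs_triangle_ineq add_mono[OF ab2'[OF bb(2) bb(3)] ab2'[OF bb(1) bb(4)]]] by simp
  then have "\<bar>cos (Uq q + c) * (Uq2 q * Wq q + Uq1 q * Wq1 q)\<bar> \<le> 8 * p^3 * 1 + 4 * p^2 * 1"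
    by (rule ab2[OF s1(2)])
  moreover have "\<bar>cos (Uq q + c) * Uq1 q * Wq1 q\<bar> \<le> 4 * p^2 * 1" by (rule ab3[OF s1(2) bb(1) bb(4)])
  moreover have "\<bar>sin (Uq q + c) * Wq2 q\<bar> \<le> 1" by (rule ab2[OF s1(1) bb(5)])
  ultimately have b: "\<bar>gs c t\<bar> \<le> 1" "\<bar>gs1 c t\<bar> \<le> 4 * p^2 + 1"
     "\<bar>gs2 c t\<bar> \<le> 16 * p^2 * p^2 + (8 * p^3 + 4 * p^2) + 4 * p^2 + 1"
    unfolding gs2_def q_def[symmetric] by (auto simp: algebra_simps intro!: order_trans[OF abs_triangle_ineq])
  have pp: "p^2 * p^2 = p^4" by (simp flip: power_add)
  show ?thesis unfolding p_def[symmetric] using b p2 pp by linarith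
qed

abbreviation LL where "LL \<equiv> locally_lipschitz_everywhere"

lemma LL_const: "LL (\<lambda>x. c)"
  unfolding locally_lipschitz_everywhere_def
  by (intro allI exI[of _ 1] conjI exI[of _ 0]) (auto intro: lipschitz_on_constant)

lemma LL_add:
  fixes f g :: "'a::metric_space \<Rightarrow> real"
  assumes "LL f" "LL g" shows "LL (\<lambda>x. f x + g x)"
  unfolding locally_lipschitz_everywhere_def
proof
  fix x
  obtain e1 L1 where 1: "e1 > 0" "L1-lipschitz_on (ball x e1) f" using assms(1) unfolding locally_lipschitz_everywhere_def by blast
  obtain e2 L2 where 2: "e2 > 0" "L2-lipschitz_on (ball x e2) g" using assms(2) unfolding locally_lipschitz_everywhere_def by blast
  have "(L1 + L2)-lipschitz_on (ball x (min e1 e2)) (\<lambda>x. f x + g x)"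
    by (intro lipschitz_on_add lipschitz_on_subset[OF 1(2)] lipschitz_on_subset[OF 2(2)]) auto
  then show "\<exists>e>0. \<exists>L. L-lipschitz_on (ball x e) (\<lambda>x. f x + g x)" using 1 2 by (intro exI[of _ "min e1 e2"]) auto
qed

lemma LL_mult:
  fixes f g :: "'a::metric_space \<Rightarrow> real"
  assumes "LL f" "LL g" shows "LL (\<lambda>x. f x * g x)"
  unfolding locally_lipschitz_everywhere_def
proof
  fix x
  obtain e1 L1 where 1: "e1 > 0" "L1-lipschitz_on (ball x e1) f" using assms(1) unfolding locally_lipschitz_everywhere_def by blast
  obtain e2 L2 where 2: "e2 > 0" "L2-lipschitz_on (ball x e2) g" using assms(2) unfolding locally_lipschitz_everywhere_def by blast
  define e where "e = min e1 e2"
  have e: "e > 0" "ball x e \<subseteq> ball x e1" "ball x e \<subseteq> ball x e2" using 1 2 by (auto simp: e_def)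
  have L1: "L1-lipschitz_on (ball x e) f" and L2: "L2-lipschitz_on (ball x e) g"
    using lipschitz_on_subset[OF 1(2) e(2)] lipschitz_on_subset[OF 2(2) e(3)] by auto
  have L10: "L1 \<ge> 0" and L20: "L2 \<ge> 0" using L1 L2 lipschitz_on_nonneg by blast+
  define Bf where "Bf = \<bar>f x\<bar> + L1 * e"
  define Bg where "Bg = \<bar>g x\<bar> + L2 * e"
  have xin: "x \<in> ball x e" using e by simp
  have bf: "\<bar>f y\<bar> \<le> Bf" if "y \<in> ball x e" for y
  proof -
    have "dist (f y) (f x) \<le> L1 * dist y x" using lipschitz_onD[OF L1 that xin] .
    also have "\<dots> \<le> L1 * e" using that L10 by (intro mult_left_mono) (auto simp: dist_commute)
    finally show ?thesis unfolding Bf_def dist_real_def by linarith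
  qed
  have bg: "\<bar>g y\<bar> \<le> Bg" if "y \<in> ball x e" for y
  proof -
    have "dist (g y) (g x) \<le> L2 * dist y x" using lipschitz_onD[OF L2 that xin] .
    also have "\<dots> \<le> L2 * e" using that L20 by (intro mult_left_mono) (auto simp: dist_commute)
    finally show ?thesis unfolding Bg_def dist_real_def by linarith
  qed
  have Bf0: "Bf \<ge> 0" and Bg0: "Bg \<ge> 0" using e L10 L20 by (auto simp: Bf_def Bg_def)
  have "(Bf * L2 + Bg * L1)-lipschitz_on (ball x e) (\<lambda>x. f x * g x)"
  proof (rule lipschitz_onI)
    fix a b assume a: "a \<in> ball x e" and b: "b \<in> ball x e"
    have "f a * g a - f b * g b = f a * (g a - g b) + g b * (f a - f b)" by (simp add: algebra_simps)
    then have "\<bar>f a * g a - f b * g b\<bar> \<le> \<bar>f a\<bar> * \<bar>g a - g b\<bar> + \<bar>g b\<bar> * \<bar>f a - f b\<bar>"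
      by (metis abs_mult abs_triangle_ineq)
    also have "\<dots> \<le> Bf * (L2 * dist a b) + Bg * (L1 * dist a b)"
      using lipschitz_onD[OF L1 a b] lipschitz_onD[OF L2 a b] bf[OF a] bg[OF b] Bf0 Bg0
      by (intro add_mono mult_mono) (auto simp: dist_real_def)
    finally show "dist (f a * g a) (f b * g b) \<le> (Bf * L2 + Bg * L1) * dist a b"
      by (simp add: dist_real_def algebra_simps)
  qed (use Bf0 Bg0 L10 L20 in simp)
  then show "\<exists>e>0. \<exists>L. L-lipschitz_on (ball x e) (\<lambda>x. f x * g x)" using e by blast
qed

lemma LL_comp:
  fixes f :: "'a::metric_space \<Rightarrow> real" and \<phi> :: "real \<Rightarrow> real"
  assumes "LL \<phi>" "LL f" shows "LL (\<lambda>x. \<phi> (f x))"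
  unfolding locally_lipschitz_everywhere_def
proof
  fix x
  obtain e1 L1 where 1: "e1 > 0" "L1-lipschitz_on (ball x e1) f" using assms(2) unfolding locally_lipschitz_everywhere_def by blast
  obtain e2 L2 where 2: "e2 > 0" "L2-lipschitz_on (ball (f x) e2) \<phi>" using assms(1) unfolding locally_lipschitz_everywhere_def by blast
  have L10: "L1 \<ge> 0" using 1 lipschitz_on_nonneg by blast
  define e where "e = min e1 (e2 / (L1 + 1))"
  have e: "e > 0" "e \<le> e1" "e \<le> e2 / (L1 + 1)" using 1 2 L10 by (auto simp: e_def)
  have L1': "L1-lipschitz_on (ball x e) f" using lipschitz_on_subset[OF 1(2) subset_ball[OF e(2)]] .
  have "f ` ball x e \<subseteq> ball (f x) e2"
  proof
    fix z assume "z \<in> f ` ball x e"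
    then obtain y where y: "y \<in> ball x e" "z = f y" by blast
    have "dist (f x) (f y) \<le> L1 * dist x y" using lipschitz_onD[OF L1' _ y(1)] e by simp
    also have "\<dots> \<le> L1 * e" using y L10 by (intro mult_left_mono) auto
    also have "\<dots> < (L1 + 1) * e" using e by simp
    also have "\<dots> \<le> e2" using e L10 by (simp add: le_divide_eq mult.commute)
    finally show "z \<in> ball (f x) e2" using y by simp
  qed
  then have "(L2 * L1)-lipschitz_on (ball x e) (\<lambda>x. \<phi> (f x))"
    by (intro lipschitz_on_compose2[OF L1'] lipschitz_on_subset[OF 2(2)])
  then show "\<exists>e>0. \<exists>L. L-lipschitz_on (ball x e) (\<lambda>x. \<phi> (f x))" using e by blast
qed

lemma LL_nth: "LL (\<lambda>x::real^'n. x $ i)"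
  unfolding locally_lipschitz_everywhere_def
proof (intro allI exI[of _ 1] conjI exI[of _ 1])
  show "1-lipschitz_on (ball x 1) (\<lambda>x::real^'n. x $ i)" for x
    by (rule lipschitz_onI) (auto simp: dist_real_def dist_norm simp flip: vector_minus_component intro: component_le_norm_cart)
qed simp

lemma LL_vec2:
  fixes G :: "'a::metric_space \<Rightarrow> real^2"
  assumes "LL (\<lambda>x. G x $ 1)" "LL (\<lambda>x. G x $ 2)" shows "LL G"
  unfolding locally_lipschitz_everywhere_def
proof
  fix x
  obtain e1 L1 where 1: "e1 > 0" "L1-lipschitz_on (ball x e1) (\<lambda>x. G x $ 1)" using assms(1) unfolding locally_lipschitz_everywhere_def by blast
  obtain e2 L2 where 2: "e2 > 0" "L2-lipschitz_on (ball x e2) (\<lambda>x. G x $ 2)" using assms(2) unfolding locally_lipschitz_everywhere_def by blast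
  define e where "e = min e1 e2"
  have e: "e > 0" "ball x e \<subseteq> ball x e1" "ball x e \<subseteq> ball x e2" using 1 2 by (auto simp: e_def)
  have L1: "L1-lipschitz_on (ball x e) (\<lambda>x. G x $ 1)" and L2: "L2-lipschitz_on (ball x e) (\<lambda>x. G x $ 2)"
    using lipschitz_on_subset[OF 1(2) e(2)] lipschitz_on_subset[OF 2(2) e(3)] by auto
  have L10: "L1 \<ge> 0" and L20: "L2 \<ge> 0" using L1 L2 lipschitz_on_nonneg by blast+
  have "(L1 + L2)-lipschitz_on (ball x e) G"
  proof (rule lipschitz_onI)
    fix a b assume a: "a \<in> ball x e" and b: "b \<in> ball x e"
    have "dist (G a) (G b) \<le> (\<Sum>i\<in>UNIV. \<bar>(G a - G b) $ i\<bar>)" unfolding dist_norm by (rule norm_le_l1_cart)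
    also have "\<dots> = dist (G a $ 1) (G b $ 1) + dist (G a $ 2) (G b $ 2)" by (simp add: sum_2 dist_real_def)
    also have "\<dots> \<le> L1 * dist a b + L2 * dist a b"
      by (intro add_mono lipschitz_onD[OF L1 a b] lipschitz_onD[OF L2 a b])
    finally show "dist (G a) (G b) \<le> (L1 + L2) * dist a b" by (simp add: algebra_simps)
  qed (use L10 L20 in simp)
  then show "\<exists>e>0. \<exists>L. L-lipschitz_on (ball x e) G" using e by blast
qed

lemma bdd: "F61 x \<ge> -2"
proof -
  consider "norm x < 1" | "norm x = 1" | "norm x > 1" by linarith
  then show ?thesis
  proof cases
    case 1 then show ?thesis by (simp add: F61_def) (smt (verit) exp_gt_zero)
  next
    case 2 then show ?thesis by (simp add: F61_def)
  next
    case 3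
    define r where "r = norm x"
    define e where "e = exp (-1 / ((norm x)\<^sup>2 - 1))"
    have r: "r > 1" using 3 by (simp add: r_def)
    have "(norm x)\<^sup>2 > 1" using 3 by (simp add: one_less_power)
    then have e: "e > 0" "e \<le> 1" by (auto simp: e_def)
    have c1: "\<bar>x $ 1 / r\<bar> \<le> 1" "\<bar>x $ 2 / r\<bar> \<le> 1" using r component_le_norm_cart[of x]
      by (auto simp: abs_divide r_def divide_le_eq)
    have s: "\<bar>sin (1 / (norm x - 1)) * (x $ 1) / norm x - cos (1 / (norm x - 1)) * (x $ 2) / norm x\<bar> \<le> 2"
    proof -
      have a: "\<bar>sin (1 / (norm x - 1)) * (x $ 1 / r)\<bar> \<le> 1" by (rule ab2[OF abs_sin_le_one c1(1)]) 
      have b: "\<bar>cos (1 / (norm x - 1)) * (x $ 2 / r)\<bar> \<le> 1" by (rule ab2[OF abs_cos_le_one c1(2)])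
      show ?thesis using a b abs_triangle_ineq4[of "sin (1 / (norm x - 1)) * (x $ 1) / norm x" "cos (1 / (norm x - 1)) * (x $ 2) / norm x"]
        unfolding r_def times_divide_eq_right by linarith
    qed
    have "\<bar>e * (sin (1 / (norm x - 1)) * (x $ 1) / norm x - cos (1 / (norm x - 1)) * (x $ 2) / norm x)\<bar> \<le> 1 * 2"
      unfolding abs_mult using e s by (intro mult_mono) auto
    moreover have "F61 x = - (e * (sin (1 / (norm x - 1)) * (x $ 1) / norm x - cos (1 / (norm x - 1)) * (x $ 2) / norm x))"
      using 3 by (simp add: F61_def e_def)
    ultimately show ?thesis by linarith
  qed
qed

definition sq2 :: "real^2 \<Rightarrow> real" where "sq2 x = x$1 * x$1 + x$2 * x$2"

lemma norm_sq2: "(norm x)\<^sup>2 = sq2 x"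
  by (simp add: norm_vec_def L2_set_def sum_2 sq2_def power2_eq_square)

lemma H_props:
  "(flat (\<lambda>_. 1) has_real_derivative flat1 (\<lambda>_. 1) (\<lambda>_. 0) t) (at t)"
  "LL (flat (\<lambda>_. 1))" "LL (flat1 (\<lambda>_. 1) (\<lambda>_. 0))"
  by (rule flat_deriv[of "\<lambda>_. 1" "\<lambda>_. 0" "\<lambda>_. 0" 1 0] flat_LL[of "\<lambda>_. 1" "\<lambda>_. 0" "\<lambda>_. 0" 1 0]
      flat1_LL[of "\<lambda>_. 1" "\<lambda>_. 0" "\<lambda>_. 0" 1 0]; simp)+

lemma S_props:
  "(flat (gs c) has_real_derivative flat1 (gs c) (gs1 c) t) (at t)"
  "LL (flat (gs c))" "LL (flat1 (gs c) (gs1 c))"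
  by (rule flat_deriv[of "gs c" "gs1 c" "gs2 c" 33 4] flat_LL[of "gs c" "gs1 c" "gs2 c" 33 4]
      flat1_LL[of "gs c" "gs1 c" "gs2 c" 33 4]; simp add: dgs dgs1 gs_bounds)+

lemma F61_eq: "F61 x = flat (\<lambda>_. 1) (1 - sq2 x) - flat (gs 0) (sq2 x - 1) * x$1 + flat (gs (pi/2)) (sq2 x - 1) * x$2"
proof -
  have s: "sq2 x = (norm x)\<^sup>2" by (simp add: norm_sq2)
  consider "norm x < 1" | "norm x = 1" | "norm x > 1" by linarith
  then show ?thesis
  proof cases
    case 1
    then have "(norm x)\<^sup>2 < 1" by (simp add: power_less_one_iff abs_less_iff)
    then show ?thesis using 1 unfolding s by (simp add: F61_def flat_def) (simp add: field_simps)
  next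
    case 2 then show ?thesis unfolding s by (simp add: F61_def flat_def)
  next
    case 3
    then have n2: "(norm x)\<^sup>2 > 1" by (simp add: one_less_power)
    have sq: "sqrt (1 + ((norm x)\<^sup>2 - 1)) = norm x" by simp
    have n3: "\<not> (norm x)\<^sup>2 < 1" using n2 by simp
    show ?thesis using 3 n2 n3 unfolding s
      by (simp add: F61_def flat_def gs_def sq Uq_def Wq_def sin_add algebra_simps)
  qed
qed

definition "Dx x = -2 * flat1 (\<lambda>_. 1) (\<lambda>_. 0) (1 - sq2 x) - 2 * flat1 (gs 0) (gs1 0) (sq2 x - 1) * x$1
   + 2 * flat1 (gs (pi/2)) (gs1 (pi/2)) (sq2 x - 1) * x$2"

definition Gv :: "real^2 \<Rightarrow> real^2" where
  "Gv x = (\<chi> i. if i = 1 then Dx x * x$1 - flat (gs 0) (sq2 x - 1) else Dx x * x$2 + flat (gs (pi/2)) (sq2 x - 1))"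

lemma Gv1: "Gv x $ 1 = Dx x * x$1 - flat (gs 0) (sq2 x - 1)" by (simp add: Gv_def)
lemma Gv2: "Gv x $ 2 = Dx x * x$2 + flat (gs (pi/2)) (sq2 x - 1)" by (simp add: Gv_def)

lemma dn: "((\<lambda>x::real^2. x$i) has_derivative (\<lambda>h. h$i)) (at x)"
  by (rule bounded_linear_imp_has_derivative[OF bounded_linear_vec_nth])

lemma ds: "(sq2 has_derivative (\<lambda>h. 2 * (x$1 * h$1) + 2 * (x$2 * h$2))) (at x)"
  unfolding sq2_def[abs_def]
  by (rule has_derivative_eq_rhs[OF has_derivative_add[OF has_derivative_mult[OF dn dn] has_derivative_mult[OF dn dn]]])
     (simp add: fun_eq_iff algebra_simps)

lemma comp_real:
  assumes "(a has_derivative a') (at x)" "(\<phi> has_real_derivative d) (at (a x))"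
  shows "((\<lambda>x. \<phi> (a x)) has_derivative (\<lambda>h. d * a' h)) (at x)"
  using has_derivative_compose[OF assms(1) assms(2)[unfolded has_field_derivative_def]] by simp

lemma ds1: "((\<lambda>x. 1 - sq2 x) has_derivative (\<lambda>h. - (2 * (x$1 * h$1) + 2 * (x$2 * h$2)))) (at x)"
  using has_derivative_diff[OF has_derivative_const ds] by simp
lemma ds2: "((\<lambda>x. sq2 x - 1) has_derivative (\<lambda>h. 2 * (x$1 * h$1) + 2 * (x$2 * h$2))) (at x)"
  using has_derivative_diff[OF ds has_derivative_const] by simp

lemma F61_deriv: "(F61 has_derivative (\<lambda>h. Gv x \<bullet> h)) (at x)"
proof -
  have eq: "F61 = (\<lambda>x. flat (\<lambda>_. 1) (1 - sq2 x) - flat (gs 0) (sq2 x - 1) * x$1 + flat (gs (pi/2)) (sq2 x - 1) * x$2)"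
    by (rule ext) (rule F61_eq)
  have A: "((\<lambda>x. flat (\<lambda>_. 1) (1 - sq2 x)) has_derivative (\<lambda>h. flat1 (\<lambda>_. 1) (\<lambda>_. 0) (1 - sq2 x) * - (2 * (x$1 * h$1) + 2 * (x$2 * h$2)))) (at x)"
    by (rule comp_real[OF ds1 H_props(1)])
  have B: "((\<lambda>x. flat (gs c) (sq2 x - 1)) has_derivative (\<lambda>h. flat1 (gs c) (gs1 c) (sq2 x - 1) * (2 * (x$1 * h$1) + 2 * (x$2 * h$2)))) (at x)" for c
    by (rule comp_real[OF ds2 S_props(1)])
  have all: "((\<lambda>x. flat (\<lambda>_. 1) (1 - sq2 x) - flat (gs 0) (sq2 x - 1) * x$1 + flat (gs (pi/2)) (sq2 x - 1) * x$2) has_derivative (\<lambda>h. Gv x \<bullet> h)) (at x)"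
    apply (rule has_derivative_eq_rhs[OF has_derivative_add[OF has_derivative_diff[OF A has_derivative_mult[OF B dn]] has_derivative_mult[OF B dn]]])
    apply (simp add: fun_eq_iff inner_vec_def sum_2 Gv1 Gv2 Dx_def algebra_simps)
    done
  show ?thesis unfolding eq by (rule all)
qed

lemma LL_diff:
  fixes f g :: "'a::metric_space \<Rightarrow> real"
  assumes "LL f" "LL g" shows "LL (\<lambda>x. f x - g x)"
  using LL_add[OF assms(1) LL_mult[OF LL_const[of "-1"] assms(2)]] by simp

lemma LL_sq2: "LL sq2"
  unfolding sq2_def[abs_def] by (intro LL_add LL_mult LL_nth)

lemma LL_Gv: "LL Gv"
proof -
  have s1: "LL (\<lambda>x. 1 - sq2 x)" by (intro LL_diff LL_const LL_sq2)
  have s2: "LL (\<lambda>x. sq2 x - 1)" by (intro LL_diff LL_const LL_sq2)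
  have D: "LL Dx"
    unfolding Dx_def[abs_def]
    by (intro LL_add LL_diff LL_mult LL_const LL_nth LL_comp[OF H_props(3) s1] LL_comp[OF S_props(3) s2])
  show ?thesis
    by (rule LL_vec2, unfold Gv1 Gv2)
       (intro LL_add LL_diff LL_mult D LL_nth LL_comp[OF S_props(2) s2])+
qed

theorem proposition6p1:
  shows "bdd_below (range F61)
    \<and> (\<forall>x. F61 differentiable (at x))
    \<and> (\<exists>G :: real^2 \<Rightarrow> real^2.
          (\<forall>x. (F61 has_derivative (\<lambda>h. G x \<bullet> h)) (at x))
          \<and> locally_lipschitz_everywhere G)"
proof (intro conjI allI exI[of _ Gv])
  show "bdd_below (range F61)" using bdd by (auto simp: bdd_below_def)
  show "F61 differentiable (at x)" for x using F61_deriv by (auto simp: differentiable_def)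
  show "(F61 has_derivative (\<lambda>h. Gv x \<bullet> h)) (at x)" for x by (rule F61_deriv)
  show "locally_lipschitz_everywhere Gv" by (rule LL_Gv)
qed


end
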